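(* Let $M=(S,\Sigma,\delta,s_0,F)$ be a deterministic finite automaton, let $T\ge 1$ be an integer, and for each $s\in S$ let $P(\cdot\mid s)$ and $Q(\cdot\mid s)$ be probability distributions on $\Sigma$. Define distributions $P$ and $Q$ on $\Sigma^T$ by $P(x)=\prod_{t=1}^T P(\sigma_t\mid s_t)$ and $Q(x)=\prod_{t=1}^T Q(\sigma_t\mid s_t)$ for $x=\sigma_1\cdots\sigma_T$, where $s_1\cdots s_{T+1}$ is the state sequence induced by $x$, and let $f^*(x)=\mathbb{1}(s_{T+1}\in F)$. Define $P_t$ on $S$ by $P_1(s')=\mathbb{1}(s'=s_0)$ and $P_t(s')=\mathbb{P}_{s\sim P_{t-1},\sigma\sim P(\cdot\mid s)}[s'=\delta(s,\sigma)]$ for $t\ge2$, and $P_t(s,\sigma)=P_t(s)P(\sigma\mid s)$; define $Q_t(s)$ and $Q_t(s,\sigma)$ analogously using $Q(\cdot\mid s)$. Let $\hat g:S\times\Sigma\to S$ and $\hat h:S\to\{0,1\}$ be arbitrary functions, and define $\hat f:\Sigma^T\to\{0,1\}$ by $\hat f(\sigma_1\cdots\sigma_T)=\hat h(\hat s_{T+1})$, where $\hat s_1=s_0$ and $\hat s_{t+1}=\hat g(\hat s_t,\sigma_t)$. Let $\tilde L_P(\hat f)=\sum_{t=1}^T L_{P_t}(\hat g)+L_{P_{T+1}}(\hat h)$. Then $$L_Q(\hat f)\le \tilde L_P(\hat f)+\sum_{t=1}^T\mathrm{TV}(P_t(s,\sigma),Q_t(s,\sigma))+\mathrm{TV}(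P_{T+1}(s),Q_{T+1}(s)).$$
   Context: A deterministic finite automaton $M=(S,\Sigma,\delta,s_0,F)$ has a finite state set $S$, a finite alphabet $\Sigma$, a transition function $\delta:S\times\Sigma\to S$, an initial state $s_0\in S$ and final states $F\subseteq S$. For $x=\sigma_1\cdots\sigma_T$, the induced state sequence is $s_1=s_0$, $s_{t+1}=\delta(s_t,\sigma_t)$. Losses: $L_Q(\hat f)=\mathbb{P}_{x\sim Q}[\hat f(x)\neq f^*(x)]$; $L_{P_t}(\hat g)=\mathbb{P}_{(s,\sigma)\sim P_t(s,\sigma)}[\hat g(s,\sigma)\neq\delta(s,\sigma)]$; $L_{P_{T+1}}(\hat h)=\mathbb{P}_{s\sim P_{T+1}}[\hat h(s)\neq\mathbb{1}(s\in F)]$. The total variation distance is defined without the factor $1/2$: $\mathrm{TV}(\mu,\nu)=\sum_a|\mu(a)-\nu(a)|$. *)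

theory Defs
  imports Complex_Main
begin

(* States: finite type 's; alphabet: finite type 'a.
   A word x = sigma_1 ... sigma_T is a list of length T; (x ! (t-1)) = sigma_t. *)

(* state reached after reading xs from s: run d s0 (take (t-1) x) = s_t *)
definition run :: "('s \<Rightarrow> 'a \<Rightarrow> 's) \<Rightarrow> 's \<Rightarrow> 'a list \<Rightarrow> 's" where
  "run d s0 xs = foldl d s0 xs"

definition word_prob :: "('s \<Rightarrow> 'a \<Rightarrow> real) \<Rightarrow> ('s \<Rightarrow> 'a \<Rightarrow> 's) \<Rightarrow> 's \<Rightarrow> 'a list \<Rightarrow> real" where
  "word_prob K d s0 x = (\<Prod>t\<in>{1..length x}. K (run d s0 (take (t - 1) x)) (x ! (t - 1)))"

(* state marginals P_t, indexed as in the paper: P_1 = point mass at s0,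
   P_t(s') = sum_{s,sigma} P_{t-1}(s) K(sigma|s) 1(s' = d s sigma) for t >= 2.
   (Index 0 is unused; it is set equal to P_1.) *)
fun state_marg :: "('s::finite \<Rightarrow> 'a::finite \<Rightarrow> real) \<Rightarrow> ('s \<Rightarrow> 'a \<Rightarrow> 's) \<Rightarrow> 's \<Rightarrow> nat \<Rightarrow> 's \<Rightarrow> real" where
  "state_marg K d s0 0 = (\<lambda>s'. if s' = s0 then 1 else 0)"
| "state_marg K d s0 (Suc 0) = (\<lambda>s'. if s' = s0 then 1 else 0)"
| "state_marg K d s0 (Suc (Suc t)) =
     (\<lambda>s'. \<Sum>s\<in>UNIV. \<Sum>\<sigma>\<in>UNIV. state_marg K d s0 (Suc t) s * K s \<sigma> * (if s' = d s \<sigma> then 1 else 0))"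

definition joint_marg :: "('s::finite \<Rightarrow> 'a::finite \<Rightarrow> real) \<Rightarrow> ('s \<Rightarrow> 'a \<Rightarrow> 's) \<Rightarrow> 's \<Rightarrow> nat \<Rightarrow> 's \<Rightarrow> 'a \<Rightarrow> real" where
  "joint_marg K d s0 t s \<sigma> = state_marg K d s0 t s * K s \<sigma>"

(* total variation without the factor 1/2 *)
definition TV_state :: "('s::finite \<Rightarrow> real) \<Rightarrow> ('s \<Rightarrow> real) \<Rightarrow> real" where
  "TV_state \<mu> \<nu> = (\<Sum>s\<in>UNIV. \<bar>\<mu> s - \<nu> s\<bar>)"

definition TV_joint :: "('s::finite \<Rightarrow> 'a::finite \<Rightarrow> real) \<Rightarrow> ('s \<Rightarrow> 'a \<Rightarrow> real) \<Rightarrow> real" where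
  "TV_joint \<mu> \<nu> = (\<Sum>s\<in>UNIV. \<Sum>\<sigma>\<in>UNIV. \<bar>\<mu> s \<sigma> - \<nu> s \<sigma>\<bar>)"

definition word_loss :: "('s \<Rightarrow> 'a \<Rightarrow> real) \<Rightarrow> ('s \<Rightarrow> 'a \<Rightarrow> 's) \<Rightarrow> 's \<Rightarrow> nat
    \<Rightarrow> ('a list \<Rightarrow> bool) \<Rightarrow> ('a list \<Rightarrow> bool) \<Rightarrow> real" where
  "word_loss K d s0 T fh fs =
     (\<Sum>x\<in>{x. length x = T}. word_prob K d s0 x * (if fh x \<noteq> fs x then 1 else 0))"

definition trans_loss :: "('s::finite \<Rightarrow> 'a::finite \<Rightarrow> real) \<Rightarrow> ('s \<Rightarrow> 'a \<Rightarrow> 's) \<Rightarrow> 's \<Rightarrow> nat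
    \<Rightarrow> ('s \<Rightarrow> 'a \<Rightarrow> 's) \<Rightarrow> real" where
  "trans_loss K d s0 t g =
     (\<Sum>s\<in>UNIV. \<Sum>\<sigma>\<in>UNIV. joint_marg K d s0 t s \<sigma> * (if g s \<sigma> \<noteq> d s \<sigma> then 1 else 0))"

definition final_loss :: "('s::finite \<Rightarrow> 'a::finite \<Rightarrow> real) \<Rightarrow> ('s \<Rightarrow> 'a \<Rightarrow> 's) \<Rightarrow> 's \<Rightarrow> nat
    \<Rightarrow> 's set \<Rightarrow> ('s \<Rightarrow> bool) \<Rightarrow> real" where
  "final_loss K d s0 t F h =
     (\<Sum>s\<in>UNIV. state_marg K d s0 t s * (if h s \<noteq> (s \<in> F) then 1 else 0))"

end

theory Submission
  imports Defs
begin

lemma finite_len: "finite {x::'a::finite list. length x = n}"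
  using finite_lists_length_eq[of "UNIV::'a set" n] by simp

lemma img_snoc: "{x::'a list. length x = Suc n} = (\<lambda>(y,a). y@[a]) ` ({y. length y = n} \<times> UNIV)"
proof (rule set_eqI)
  fix x :: "'a list"
  show "(x \<in> {x. length x = Suc n}) = (x \<in> (\<lambda>(y,a). y@[a]) ` ({y. length y = n} \<times> UNIV))"
  proof
    assume "x \<in> {x. length x = Suc n}"
    then have "length x = Suc n" by simp
    then have "x \<noteq> []" by auto
    then have "x = butlast x @ [last x]" by simp
    moreover have "length (butlast x) = n" using \<open>length x = Suc n\<close> by simp
    ultimately show "x \<in> (\<lambda>(y,a). y@[a]) ` ({y. length y = n} \<times> UNIV)"
      by (intro image_eqI[where x="(butlast x, last x)"]) auto
  qed auto
qed

lemma sum_len_Suc: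
  fixes f :: "'a::finite list \<Rightarrow> real"
  shows "(\<Sum>x\<in>{x. length x = Suc n}. f x) = (\<Sum>y\<in>{y. length y = n}. \<Sum>a\<in>UNIV. f (y @ [a]))"
proof -
  note img = img_snoc[of n]
  have inj: "inj_on (\<lambda>(y,a). y@[a]) ({y::'a list. length y = n} \<times> UNIV)"
    by (auto simp: inj_on_def)
  show ?thesis
    unfolding img sum.reindex[OF inj]
    by (simp add: sum.cartesian_product split_def)
qed

lemma run_snoc: "run d s0 (y @ [a]) = d (run d s0 y) a"
  by (simp add: run_def)

lemma wp_snoc: "word_prob K d s0 (y @ [a]) = word_prob K d s0 y * K (run d s0 y) a"
proof -
  have "word_prob K d s0 (y @ [a]) =
     (\<Prod>t\<in>{1..length y}. K (run d s0 (take (t - 1) (y@[a]))) ((y@[a]) ! (t - 1))) *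
      K (run d s0 (take (length y) (y@[a]))) ((y@[a]) ! length y)"
    unfolding word_prob_def by (simp add: prod.cl_ivl_Suc)
  also have "(\<Prod>t\<in>{1..length y}. K (run d s0 (take (t - 1) (y@[a]))) ((y@[a]) ! (t - 1)))
     = word_prob K d s0 y"
    unfolding word_prob_def
    by (rule prod.cong) (auto simp: nth_append)
  finally show ?thesis by simp
qed

lemma wp_nonneg:
  assumes "\<And>s \<sigma>. K s \<sigma> \<ge> 0"
  shows "word_prob K d s0 x \<ge> 0"
  unfolding word_prob_def by (rule prod_nonneg) (use assms in auto)

lemma marg_take:
  fixes K :: "'s \<Rightarrow> 'a::finite \<Rightarrow> real"
  assumes Ks: "\<And>s. (\<Sum>\<sigma>\<in>UNIV. K s \<sigma>) = 1"
  shows "(\<Sum>x\<in>{x. length x = n + k}. word_prob K d s0 x * f (take n x))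
       = (\<Sum>x\<in>{x. length x = n}. word_prob K d s0 x * f x)"
proof (induction k)
  case 0
  show ?case by (rule sum.cong) auto
next
  case (Suc k)
  have "(\<Sum>x\<in>{x. length x = n + Suc k}. word_prob K d s0 x * f (take n x))
      = (\<Sum>y\<in>{y. length y = n + k}. \<Sum>a\<in>UNIV. word_prob K d s0 (y@[a]) * f (take n (y@[a])))"
    using sum_len_Suc[of "\<lambda>x. word_prob K d s0 x * f (take n x)" "n+k"] by simp
  also have "\<dots> = (\<Sum>y\<in>{y. length y = n + k}. word_prob K d s0 y * f (take n y) * (\<Sum>a\<in>UNIV. K (run d s0 y) a))"
    by (rule sum.cong) (auto simp: wp_snoc sum_distrib_left mult_ac)
  also have "\<dots> = (\<Sum>y\<in>{y. length y = n + k}. word_prob K d s0 y * f (take n y))"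
    by (simp add: Ks)
  finally show ?case using Suc by simp
qed

lemma delta_lem:
  fixes f :: "'s::finite \<Rightarrow> real"
  shows "(\<Sum>s'\<in>UNIV. c * (if s' = x then 1 else 0) * f s') = c * f x"
proof -
  have "(\<Sum>s'\<in>UNIV. c * (if s' = x then 1 else 0) * f s') = (\<Sum>s'\<in>UNIV. if s' = x then c * f s' else 0)"
    by (rule sum.cong) auto
  then show ?thesis by simp
qed

lemma marg_state:
  fixes K :: "'s::finite \<Rightarrow> 'a::finite \<Rightarrow> real" and f :: "'s \<Rightarrow> real"
  shows "(\<Sum>x\<in>{x. length x = n}. word_prob K d s0 x * f (run d s0 x))
       = (\<Sum>s\<in>UNIV. state_marg K d s0 (Suc n) s * f s)"
proof (induction n arbitrary: f)
  case 0
  have "{x::'a list. length x = 0} = {[]}" by auto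
  have "(\<Sum>s\<in>UNIV. (if s = s0 then 1 else 0) * f s) = (\<Sum>s\<in>UNIV. if s = s0 then f s else 0)"
    by (rule sum.cong) auto
  with \<open>{x::'a list. length x = 0} = {[]}\<close> show ?case by (simp add: word_prob_def run_def)
next
  case (Suc n)
  have "(\<Sum>x\<in>{x. length x = Suc n}. word_prob K d s0 x * f (run d s0 x))
     = (\<Sum>y\<in>{y. length y = n}. \<Sum>a\<in>UNIV. word_prob K d s0 (y@[a]) * f (run d s0 (y@[a])))"
    by (rule sum_len_Suc)
  also have "\<dots> = (\<Sum>y\<in>{y. length y = n}. word_prob K d s0 y * (\<lambda>s. \<Sum>a\<in>UNIV. K s a * f (d s a)) (run d s0 y))"
    by (rule sum.cong) (auto simp: wp_snoc run_snoc sum_distrib_left mult_ac)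
  also have "\<dots> = (\<Sum>s\<in>UNIV. state_marg K d s0 (Suc n) s * (\<Sum>a\<in>UNIV. K s a * f (d s a)))"
    by (rule Suc.IH)
  also have "\<dots> = (\<Sum>s'\<in>UNIV. \<Sum>s\<in>UNIV. \<Sum>\<sigma>\<in>UNIV. state_marg K d s0 (Suc n) s * K s \<sigma> * (if s' = d s \<sigma> then 1 else 0) * f s')"
  proof -
    have "(\<Sum>s'\<in>UNIV. \<Sum>s\<in>UNIV. \<Sum>\<sigma>\<in>UNIV. state_marg K d s0 (Suc n) s * K s \<sigma> * (if s' = d s \<sigma> then 1 else 0) * f s')
      = (\<Sum>s\<in>UNIV. \<Sum>\<sigma>\<in>UNIV. \<Sum>s'\<in>UNIV. state_marg K d s0 (Suc n) s * K s \<sigma> * (if s' = d s \<sigma> then 1 else 0) * f s')"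
      by (rule trans[OF sum.swap]) (rule sum.cong[OF refl], rule sum.swap)
    also have "\<dots> = (\<Sum>s\<in>UNIV. \<Sum>\<sigma>\<in>UNIV. state_marg K d s0 (Suc n) s * K s \<sigma> * f (d s \<sigma>))"
      by (simp only: delta_lem)
    finally show ?thesis by (simp add: sum_distrib_left mult_ac)
  qed
  also have "\<dots> = (\<Sum>s'\<in>UNIV. state_marg K d s0 (Suc (Suc n)) s' * f s')"
    by (simp add: sum_distrib_right)
  finally show ?case .
qed

lemma marg_joint:
  fixes K :: "'s::finite \<Rightarrow> 'a::finite \<Rightarrow> real" and f :: "'s \<Rightarrow> 'a \<Rightarrow> real"
  assumes Ks: "\<And>s. (\<Sum>\<sigma>\<in>UNIV. K s \<sigma>) = 1"
    and t: "1 \<le> t" "t \<le> T"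
  shows "(\<Sum>x\<in>{x. length x = T}. word_prob K d s0 x * f (run d s0 (take (t-1) x)) (x!(t-1)))
       = (\<Sum>s\<in>UNIV. \<Sum>\<sigma>\<in>UNIV. joint_marg K d s0 t s \<sigma> * f s \<sigma>)"
proof -
  obtain m where m: "t = Suc m" using t by (cases t) auto
  define G where "G y = f (run d s0 (take m y)) (y!m)" for y :: "'a list"
  have T': "T = Suc m + (T - Suc m)" using t m by simp
  have "(\<Sum>x\<in>{x. length x = T}. word_prob K d s0 x * f (run d s0 (take (t-1) x)) (x!(t-1)))
      = (\<Sum>x\<in>{x. length x = T}. word_prob K d s0 x * G (take (Suc m) x))"
    by (rule sum.cong) (auto simp: G_def m min_def)
  also have "\<dots> = (\<Sum>x\<in>{x. length x = Suc m + (T - Suc m)}. word_prob K d s0 x * G (take (Suc m) x))"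
    using T' by simp
  also have "\<dots> = (\<Sum>x\<in>{x. length x = Suc m}. word_prob K d s0 x * G x)"
    by (rule marg_take[OF Ks])
  also have "\<dots> = (\<Sum>y\<in>{y. length y = m}. \<Sum>a\<in>UNIV. word_prob K d s0 (y@[a]) * G (y@[a]))"
    by (rule sum_len_Suc)
  also have "\<dots> = (\<Sum>y\<in>{y. length y = m}. word_prob K d s0 y * (\<lambda>s. \<Sum>a\<in>UNIV. K s a * f s a) (run d s0 y))"
    by (rule sum.cong) (auto simp: wp_snoc G_def sum_distrib_left mult_ac)
  also have "\<dots> = (\<Sum>s\<in>UNIV. state_marg K d s0 (Suc m) s * (\<Sum>a\<in>UNIV. K s a * f s a))"
    by (rule marg_state)
  also have "\<dots> = (\<Sum>s\<in>UNIV. \<Sum>\<sigma>\<in>UNIV. joint_marg K d s0 t s \<sigma> * f s \<sigma>)"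
    by (simp add: joint_marg_def m sum_distrib_left mult_ac)
  finally show ?thesis .
qed

lemma run_agree:
  assumes "\<forall>i < length x. g (run d s0 (take i x)) (x!i) = d (run d s0 (take i x)) (x!i)"
  shows "run g s0 x = run d s0 x"
  using assms
proof (induction x rule: rev_induct)
  case Nil
  then show ?case by (simp add: run_def)
next
  case (snoc a x)
  have "\<forall>i < length x. g (run d s0 (take i x)) (x!i) = d (run d s0 (take i x)) (x!i)"
  proof (intro allI impI)
    fix i assume i: "i < length x"
    from snoc.prems i have "g (run d s0 (take i (x@[a]))) ((x@[a])!i) = d (run d s0 (take i (x@[a]))) ((x@[a])!i)"
      by simp
    with i show "g (run d s0 (take i x)) (x!i) = d (run d s0 (take i x)) (x!i)"
      by (simp add: nth_append)
  qed
  then have IH: "run g s0 x = run d s0 x" by (rule snoc.IH)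
  have "length x < length (x@[a])" by simp
  with snoc.prems have "g (run d s0 (take (length x) (x@[a]))) ((x@[a])!length x) = d (run d s0 (take (length x) (x@[a]))) ((x@[a])!length x)"
    by blast
  then show ?case by (simp add: run_snoc IH)
qed

theorem theorem4p7:
  fixes \<delta> :: "'s::finite \<Rightarrow> 'a::finite \<Rightarrow> 's"
    and s0 :: 's and F :: "'s set" and T :: nat
    and P Q :: "'s \<Rightarrow> 'a \<Rightarrow> real"
    and g :: "'s \<Rightarrow> 'a \<Rightarrow> 's" and h :: "'s \<Rightarrow> bool"
  assumes T: "T \<ge> 1"
    and P_nonneg: "\<And>s \<sigma>. P s \<sigma> \<ge> 0" and P_sum: "\<And>s. (\<Sum>\<sigma>\<in>UNIV. P s \<sigma>) = 1"
    and Q_nonneg: "\<And>s \<sigma>. Q s \<sigma> \<ge> 0" and Q_sum: "\<And>s. (\<Sum>\<sigma>\<in>UNIV. Q s \<sigma>) = 1"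
  shows "word_loss Q \<delta> s0 T (\<lambda>x. h (run g s0 x)) (\<lambda>x. run \<delta> s0 x \<in> F)
         \<le> (\<Sum>t\<in>{1..T}. trans_loss P \<delta> s0 t g) + final_loss P \<delta> s0 (T + 1) F h
           + (\<Sum>t\<in>{1..T}. TV_joint (joint_marg P \<delta> s0 t) (joint_marg Q \<delta> s0 t))
           + TV_state (state_marg P \<delta> s0 (T + 1)) (state_marg Q \<delta> s0 (T + 1))"
proof -
  define It where "It t x = (if g (run \<delta> s0 (take (t-1) x)) (x!(t-1)) \<noteq> \<delta> (run \<delta> s0 (take (t-1) x)) (x!(t-1)) then 1 else (0::real))" for t x
  define If where "If x = (if h (run \<delta> s0 x) \<noteq> (run \<delta> s0 x \<in> F) then 1 else (0::real))" for x
  define wp where "wp = word_prob Q \<delta> s0"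
  have pw: "(if h (run g s0 x) \<noteq> (run \<delta> s0 x \<in> F) then 1 else 0) \<le> (\<Sum>t\<in>{1..T}. It t x) + If x"
    if x: "length x = T" for x
  proof (cases "h (run g s0 x) \<noteq> (run \<delta> s0 x \<in> F)")
    case True
    have nn: "(\<Sum>t\<in>{1..T}. It t x) \<ge> 0" by (rule sum_nonneg) (simp add: It_def)
    show ?thesis
    proof (cases "\<exists>t\<in>{1..T}. It t x = 1")
      case True
      then obtain t where t: "t \<in> {1..T}" "It t x = 1" by blast
      have "It t x \<le> (\<Sum>t\<in>{1..T}. It t x)"
        by (rule member_le_sum[OF t(1)]) (auto simp: It_def)
      then show ?thesis using t by (simp add: If_def)
    next
      case False
      have "\<forall>i < length x. g (run \<delta> s0 (take i x)) (x!i) = \<delta> (run \<delta> s0 (take i x)) (x!i)"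
      proof (intro allI impI)
        fix i assume "i < length x"
        then have "Suc i \<in> {1..T}" using x by auto
        with False have "It (Suc i) x \<noteq> 1" by blast
        then show "g (run \<delta> s0 (take i x)) (x!i) = \<delta> (run \<delta> s0 (take i x)) (x!i)"
          by (simp add: It_def split: if_splits)
      qed
      then have "run g s0 x = run \<delta> s0 x" by (rule run_agree)
      then have "If x = 1" using \<open>h (run g s0 x) \<noteq> (run \<delta> s0 x \<in> F)\<close> by (simp add: If_def)
      then show ?thesis using nn by simp
    qed
  next
    case False
    have nn: "(\<Sum>t\<in>{1..T}. It t x) \<ge> 0" by (rule sum_nonneg) (simp add: It_def)
    then show ?thesis using False by (simp add: If_def)
  qed
  have wpn: "wp x \<ge> 0" for x unfolding wp_def by (rule wp_nonneg) (rule Q_nonneg)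
  have L1: "word_loss Q \<delta> s0 T (\<lambda>x. h (run g s0 x)) (\<lambda>x. run \<delta> s0 x \<in> F)
      \<le> (\<Sum>x\<in>{x. length x = T}. wp x * ((\<Sum>t\<in>{1..T}. It t x) + If x))"
    unfolding word_loss_def wp_def[symmetric]
  proof (rule sum_mono)
    fix x assume "x \<in> {x::'a list. length x = T}"
    then have "length x = T" by simp
    show "wp x * (if h (run g s0 x) \<noteq> (run \<delta> s0 x \<in> F) then 1 else 0) \<le> wp x * ((\<Sum>t\<in>{1..T}. It t x) + If x)"
      by (rule mult_left_mono[OF pw[OF \<open>length x = T\<close>] wpn])
  qed
  have L2: "(\<Sum>x\<in>{x. length x = T}. wp x * ((\<Sum>t\<in>{1..T}. It t x) + If x)) = (\<Sum>t\<in>{1..T}. \<Sum>x\<in>{x. length x = T}. wp x * It t x) + (\<Sum>x\<in>{x. length x = T}. wp x * If x)"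
    by (simp add: distrib_left sum.distrib sum_distrib_left) (rule sum.swap)
  have L3: "(\<Sum>x\<in>{x. length x = T}. wp x * If x) = final_loss Q \<delta> s0 (T+1) F h"
  proof -
    have M: "(\<Sum>x\<in>{x. length x = T}. word_prob Q \<delta> s0 x * (\<lambda>s. if h s \<noteq> (s \<in> F) then 1 else (0::real)) (run \<delta> s0 x))
       = (\<Sum>s\<in>UNIV. state_marg Q \<delta> s0 (Suc T) s * (\<lambda>s. if h s \<noteq> (s \<in> F) then 1 else (0::real)) s)"
      by (rule marg_state)
    then show ?thesis by (simp add: wp_def If_def final_loss_def)
  qed
  have L4: "(\<Sum>t\<in>{1..T}. \<Sum>x\<in>{x. length x = T}. wp x * It t x) = (\<Sum>t\<in>{1..T}. trans_loss Q \<delta> s0 t g)"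
  proof (rule sum.cong[OF refl])
    fix t assume "t \<in> {1..T}"
    then show "(\<Sum>x\<in>{x. length x = T}. wp x * It t x) = trans_loss Q \<delta> s0 t g"
    proof -
      have M: "(\<Sum>x\<in>{x. length x = T}. word_prob Q \<delta> s0 x * (\<lambda>s \<sigma>. if g s \<sigma> \<noteq> \<delta> s \<sigma> then 1 else (0::real)) (run \<delta> s0 (take (t-1) x)) (x!(t-1)))
       = (\<Sum>s\<in>UNIV. \<Sum>\<sigma>\<in>UNIV. joint_marg Q \<delta> s0 t s \<sigma> * (\<lambda>s \<sigma>. if g s \<sigma> \<noteq> \<delta> s \<sigma> then 1 else (0::real)) s \<sigma>)"
        by (rule marg_joint[OF Q_sum]) (use \<open>t \<in> {1..T}\<close> in auto)
      then show ?thesis by (simp add: wp_def It_def trans_loss_def)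
    qed
  qed
  have L5: "(\<Sum>t\<in>{1..T}. trans_loss Q \<delta> s0 t g) \<le> (\<Sum>t\<in>{1..T}. trans_loss P \<delta> s0 t g + TV_joint (joint_marg P \<delta> s0 t) (joint_marg Q \<delta> s0 t))"
  proof (rule sum_mono)
    fix t
    have "trans_loss Q \<delta> s0 t g \<le> (\<Sum>s\<in>UNIV. \<Sum>\<sigma>\<in>UNIV. joint_marg P \<delta> s0 t s \<sigma> * (if g s \<sigma> \<noteq> \<delta> s \<sigma> then 1 else 0) + \<bar>joint_marg P \<delta> s0 t s \<sigma> - joint_marg Q \<delta> s0 t s \<sigma>\<bar>)"
      unfolding trans_loss_def by (intro sum_mono) auto
    then show "trans_loss Q \<delta> s0 t g \<le> trans_loss P \<delta> s0 t g + TV_joint (joint_marg P \<delta> s0 t) (joint_marg Q \<delta> s0 t)"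
      by (simp add: trans_loss_def TV_joint_def sum.distrib)
  qed
  have L6: "final_loss Q \<delta> s0 (T+1) F h \<le> final_loss P \<delta> s0 (T+1) F h + TV_state (state_marg P \<delta> s0 (T + 1)) (state_marg Q \<delta> s0 (T + 1))"
  proof -
    have "final_loss Q \<delta> s0 (T+1) F h \<le> (\<Sum>s\<in>UNIV. state_marg P \<delta> s0 (T+1) s * (if h s \<noteq> (s \<in> F) then 1 else 0) + \<bar>state_marg P \<delta> s0 (T+1) s - state_marg Q \<delta> s0 (T+1) s\<bar>)"
      unfolding final_loss_def by (intro sum_mono) auto
    then show ?thesis by (simp add: final_loss_def TV_state_def sum.distrib)
  qed
  have L7: "(\<Sum>t\<in>{1..T}. trans_loss P \<delta> s0 t g + TV_joint (joint_marg P \<delta> s0 t) (joint_marg Q \<delta> s0 t)) = (\<Sum>t\<in>{1..T}. trans_loss P \<delta> s0 t g) + (\<Sum>t\<in>{1..T}. TV_joint (joint_marg P \<delta> s0 t) (joint_marg Q \<delta> s0 t))"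
    by (rule sum.distrib)
  show ?thesis using L1 L2 L3 L4 L5 L6 L7 by linarith
qed

end
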